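(* Let $N$ be a positive integer and $L,Q,R,S$ constant complex $N\times N$ matrices, $H=\begin{pmatrix}R&Q\\S&L\end{pmatrix}$, $H^n=\begin{pmatrix}R_n&Q_n\\S_n&L_n\end{pmatrix}$. Fix a sign $\pm$. If the $N\times N$ matrix function $\Phi$ of $\mathbf{t}=(t_1,t_2,t_3,\ldots)$ solves the Riccati hierarchy $\Phi_{t_n}=S_n+L_n\Phi-\Phi R_n-\Phi Q_n\Phi$ ($n=1,2,3,\ldots$) with data $(L,R,Q,S)$, then $\pm\Phi^\intercal\circ\varepsilon$ solves the Riccati hierarchy with data $(-R^\intercal,-L^\intercal,\pm Q^\intercal,\pm S^\intercal)$ in place of $(L,R,Q,S)$ (i.e. the transformation $L\mapsto-R^\intercal$, $R\mapsto-L^\intercal$, $Q\mapsto\pm Q^\intercal$, $S\mapsto\pm S^\intercal$, $\Phi\mapsto\pm\Phi^\intercal\circ\varepsilon$ leaves the Riccati hierarchy invariant), where $\varepsilon(t_1,t_2,t_3,t_4,\ldots)=(t_1,-t_2,t_3,-t_4,\ldots)$.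
   Context: ${}^\intercal$ denotes the transpose. For the transformed data, the matrices $R_n,Q_n,S_n,L_n$ in the hierarchy are the blocks of the $n$-th power of the transformed matrix $H$. *)

theory Defs
  imports "HOL-Analysis.Analysis" "Jordan_Normal_Form.Matrix"
begin

text \<open>Times t = (t_1, t_2, ...) are modelled as sequences nat => real; index 0 is unused.\<close>

definition eps :: "(nat \<Rightarrow> real) \<Rightarrow> (nat \<Rightarrow> real)" where
  "eps t = (\<lambda>k. if 1 \<le> k \<and> even k then - t k else t k)"

definition has_tderiv ::
  "((nat \<Rightarrow> real) \<Rightarrow> complex mat) \<Rightarrow> nat \<Rightarrow> (nat \<Rightarrow> real) \<Rightarrow> complex mat \<Rightarrow> bool" where
  "has_tderiv \<Phi> n t D \<longleftrightarrow>
     (\<forall>i < dim_row D. \<forall>j < dim_col D.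
        ((\<lambda>s. \<Phi> (t(n := s)) $$ (i, j)) has_vector_derivative D $$ (i, j)) (at (t n)))"

definition Hmat :: "complex mat \<Rightarrow> complex mat \<Rightarrow> complex mat \<Rightarrow> complex mat \<Rightarrow> complex mat" where
  "Hmat L R Q S = four_block_mat R Q S L"

definition Hblocks :: "nat \<Rightarrow> complex mat \<Rightarrow> complex mat \<Rightarrow> complex mat \<Rightarrow> complex mat \<Rightarrow> nat
    \<Rightarrow> complex mat \<times> complex mat \<times> complex mat \<times> complex mat" where
  "Hblocks N L R Q S n = split_block (Hmat L R Q S ^\<^sub>m n) N N"

definition riccati_sol :: "nat \<Rightarrow> complex mat \<Rightarrow> complex mat \<Rightarrow> complex mat \<Rightarrow> complex mat
    \<Rightarrow> ((nat \<Rightarrow> real) \<Rightarrow> complex mat) \<Rightarrow> bool" where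
  "riccati_sol N L R Q S \<Phi> \<longleftrightarrow>
     (\<forall>t. \<Phi> t \<in> carrier_mat N N) \<and>
     (\<forall>n \<ge> 1. \<forall>t. case Hblocks N L R Q S n of (Rk, Qk, Sk, Lk) \<Rightarrow>
        has_tderiv \<Phi> n t (Sk + Lk * \<Phi> t - \<Phi> t * Rk - \<Phi> t * Qk * \<Phi> t))"

end

theory Submission
  imports Defs
begin

lemma pow_comm: "A \<in> carrier_mat m m \<Longrightarrow> A * (A ^\<^sub>m n) = (A ^\<^sub>m n) * (A :: 'a::semiring_1 mat)"
proof (induction n)
  case 0 then show ?case by simp
next
  case (Suc n)
  have "A * (A ^\<^sub>m Suc n) = (A * A ^\<^sub>m n) * A" using Suc.prems by (simp add: assoc_mult_mat[of A m m _ m _ m, symmetric])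
  also have "\<dots> = A ^\<^sub>m Suc n * A" using Suc by simp
  finally show ?case .
qed

lemma pow_conj:
  fixes A B :: "complex mat" and s :: "nat \<Rightarrow> complex" and p :: "nat \<Rightarrow> nat"
  assumes A: "A \<in> carrier_mat m m" and B: "B \<in> carrier_mat m m"
    and Bd: "\<And>i j. i < m \<Longrightarrow> j < m \<Longrightarrow> B $$ (i,j) = - (s i * s j * A $$ (p j, p i))"
    and s2: "\<And>i. i < m \<Longrightarrow> s i * s i = 1"
    and p: "bij_betw p {..<m} {..<m}"
  shows "i < m \<Longrightarrow> j < m \<Longrightarrow> (B ^\<^sub>m n) $$ (i,j) = (-1)^n * s i * s j * (A ^\<^sub>m n) $$ (p j, p i)"
proof (induction n arbitrary: i j)
  case 0
  have pj: "p j < m" "p i < m" using p 0 by (auto simp: bij_betw_def)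
  have "(p j = p i) = (i = j)" using p 0 by (auto simp: bij_betw_def inj_on_def)
  then show ?case using 0 pj B A s2[of i] by auto
next
  case (Suc n)
  have pm: "\<And>k. k < m \<Longrightarrow> p k < m" using p by (auto simp: bij_betw_def)
  have "(B ^\<^sub>m Suc n) $$ (i,j) = (\<Sum>k<m. (B ^\<^sub>m n) $$ (i,k) * B $$ (k,j))"
    using Suc.prems B by (simp add: scalar_prod_def lessThan_atLeast0)
  also have "\<dots> = (\<Sum>k<m. (-1)^Suc n * s i * s j * (A $$ (p j, p k) * (A ^\<^sub>m n) $$ (p k, p i)))"
  proof (rule sum.cong[OF refl])
    fix k assume k: "k \<in> {..<m}"
    show "(B ^\<^sub>m n) $$ (i,k) * B $$ (k,j) = (-1)^Suc n * s i * s j * (A $$ (p j, p k) * (A ^\<^sub>m n) $$ (p k, p i))"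
      using k Suc s2[of k] Bd[of k j] Suc.IH[of i k]
      by (simp add: algebra_simps)
  qed
  also have "\<dots> = (-1)^Suc n * s i * s j * (\<Sum>k<m. A $$ (p j, k) * (A ^\<^sub>m n) $$ (k, p i))"
  proof -
    have "(\<Sum>k<m. A $$ (p j, p k) * (A ^\<^sub>m n) $$ (p k, p i)) = (\<Sum>k<m. A $$ (p j, k) * (A ^\<^sub>m n) $$ (k, p i))"
      using sum.reindex_bij_betw[OF p, of "\<lambda>k. A $$ (p j, k) * (A ^\<^sub>m n) $$ (k, p i)"] by simp
    then show ?thesis by (simp only: sum_distrib_left[symmetric])
  qed
  also have "(\<Sum>k<m. A $$ (p j, k) * (A ^\<^sub>m n) $$ (k, p i)) = (A * A ^\<^sub>m n) $$ (p j, p i)"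
    using A pm Suc.prems by (simp add: scalar_prod_def lessThan_atLeast0)
  also have "A * A ^\<^sub>m n = A ^\<^sub>m Suc n" using pow_comm[OF A] by simp
  finally show ?case .
qed


lemma smult_smult_mat: "a \<cdot>\<^sub>m (b \<cdot>\<^sub>m A) = (a * b :: complex) \<cdot>\<^sub>m A"
  by (rule eq_matI) auto

lemma Hmat_carrier: "L \<in> carrier_mat N N \<Longrightarrow> R \<in> carrier_mat N N \<Longrightarrow> Q \<in> carrier_mat N N \<Longrightarrow> S \<in> carrier_mat N N
  \<Longrightarrow> Hmat L R Q S \<in> carrier_mat (N+N) (N+N)"
  unfolding Hmat_def by (rule four_block_carrier_mat) auto

lemma Hpow_entries:
  assumes L: "L \<in> carrier_mat N N" and R: "R \<in> carrier_mat N N" and Q: "Q \<in> carrier_mat N N" and S: "S \<in> carrier_mat N N"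
    and sig: "\<sigma> * \<sigma> = 1"
  defines "H \<equiv> Hmat L R Q S"
    and "H2 \<equiv> Hmat (- transpose_mat R) (- transpose_mat L) (\<sigma> \<cdot>\<^sub>m transpose_mat Q) (\<sigma> \<cdot>\<^sub>m transpose_mat S)"
  assumes ij: "i < N+N" "j < N+N"
  shows "(H2 ^\<^sub>m n) $$ (i,j) =
     (-1)^n * (if i < N then 1 else -\<sigma>) * (if j < N then 1 else -\<sigma>) *
      (H ^\<^sub>m n) $$ (if j < N then j+N else j-N, if i < N then i+N else i-N)"
proof -
  have HC: "H \<in> carrier_mat (N+N) (N+N)" unfolding H_def by (rule Hmat_carrier[OF L R Q S])
  have H2C: "H2 \<in> carrier_mat (N+N) (N+N)" unfolding H2_def by (rule Hmat_carrier) (use L R Q S in auto)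
  have s2: "\<And>i. i < N + N \<Longrightarrow> (if i < N then 1 else - \<sigma>) * (if i < N then 1 else - \<sigma>) = 1"
    using sig by auto
  have p: "bij_betw (\<lambda>i. if i < N then i+N else i-N) {..<N+N} {..<N+N}"
    by (rule bij_betw_byWitness[where f'="\<lambda>i. if i < N then i+N else i-N"]) auto
  have Bd: "\<And>i j. i < N + N \<Longrightarrow> j < N + N \<Longrightarrow> H2 $$ (i, j) = - ((if i < N then 1 else - \<sigma>) * (if j < N then 1 else - \<sigma>) *
          H $$ (if j < N then j + N else j - N, if i < N then i + N else i - N))"
    unfolding H_def H2_def Hmat_def using L R Q S sig by auto
  show ?thesis
    by (rule pow_conj[where s="\<lambda>i. if i < N then 1 else - \<sigma>" and p="\<lambda>i. if i < N then i+N else i-N", OF HC H2C Bd s2 p ij])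
qed

lemma Hblocks_trans:
  assumes L: "L \<in> carrier_mat N N" and R: "R \<in> carrier_mat N N" and Q: "Q \<in> carrier_mat N N" and S: "S \<in> carrier_mat N N"
    and sig: "\<sigma> * \<sigma> = 1"
    and hb: "Hblocks N L R Q S n = (Rk, Qk, Sk, Lk)"
  shows "Hblocks N (- transpose_mat R) (- transpose_mat L) (\<sigma> \<cdot>\<^sub>m transpose_mat Q) (\<sigma> \<cdot>\<^sub>m transpose_mat S) n
    = (((-1::complex)^n) \<cdot>\<^sub>m transpose_mat Lk, (- ((-1::complex)^n * \<sigma>)) \<cdot>\<^sub>m transpose_mat Qk, (- ((-1::complex)^n * \<sigma>)) \<cdot>\<^sub>m transpose_mat Sk, ((-1::complex)^n) \<cdot>\<^sub>m transpose_mat Rk)"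
proof -
  have HC: "Hmat L R Q S \<in> carrier_mat (N+N) (N+N)" by (rule Hmat_carrier[OF L R Q S])
  have HC2: "Hmat (- transpose_mat R) (- transpose_mat L) (\<sigma> \<cdot>\<^sub>m transpose_mat Q) (\<sigma> \<cdot>\<^sub>m transpose_mat S) \<in> carrier_mat (N+N) (N+N)"
    by (rule Hmat_carrier) (use L R Q S in auto)
  note E = Hpow_entries[OF L R Q S sig, of _ _ n]
  from hb have Rk: "Rk = mat N N (\<lambda>ij. (Hmat L R Q S ^\<^sub>m n) $$ ij)"
    and Qk: "Qk = mat N N (\<lambda>(i,j). (Hmat L R Q S ^\<^sub>m n) $$ (i, j+N))"
    and Sk: "Sk = mat N N (\<lambda>(i,j). (Hmat L R Q S ^\<^sub>m n) $$ (i+N, j))"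
    and Lk: "Lk = mat N N (\<lambda>(i,j). (Hmat L R Q S ^\<^sub>m n) $$ (i+N, j+N))"
    unfolding Hblocks_def split_block_def Let_def using HC by auto
  show ?thesis
    unfolding Hblocks_def split_block_def Let_def using HC HC2 sig
    by (auto simp: Rk Qk Sk Lk E intro!: eq_matI)
qed


lemma eps_upd: "1 \<le> n \<Longrightarrow> eps (t(n := s)) = (eps t)(n := (if even n then -1 else 1) * s)"
  by (auto simp: eps_def fun_eq_iff)

lemma eps_at: "1 \<le> n \<Longrightarrow> eps t n = (if even n then -1 else 1) * t n"
  by (auto simp: eps_def)

theorem lemma5p1:
  fixes N :: nat and L R Q S :: "complex mat" and \<sigma> :: complex
    and \<Phi> :: "(nat \<Rightarrow> real) \<Rightarrow> complex mat"
  assumes "N > 0"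
    and "L \<in> carrier_mat N N" "R \<in> carrier_mat N N" "Q \<in> carrier_mat N N" "S \<in> carrier_mat N N"
    and "\<sigma> = 1 \<or> \<sigma> = -1"
    and "riccati_sol N L R Q S \<Phi>"
  shows "riccati_sol N (- transpose_mat R) (- transpose_mat L)
           (\<sigma> \<cdot>\<^sub>m transpose_mat Q) (\<sigma> \<cdot>\<^sub>m transpose_mat S)
           (\<lambda>t. \<sigma> \<cdot>\<^sub>m transpose_mat (\<Phi> (eps t)))"
proof -
  note LC = assms(2) and RC = assms(3) and QC = assms(4) and SC = assms(5)
  have sig: "\<sigma> * \<sigma> = 1" using assms(6) by auto
  have PhiC: "\<And>t. \<Phi> t \<in> carrier_mat N N" and hyp: "\<And>n t. n \<ge> 1 \<Longrightarrow> (case Hblocks N L R Q S n of (Rk, Qk, Sk, Lk) \<Rightarrow>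
        has_tderiv \<Phi> n t (Sk + Lk * \<Phi> t - \<Phi> t * Rk - \<Phi> t * Qk * \<Phi> t))"
    using assms(7) unfolding riccati_sol_def by auto
  show ?thesis unfolding riccati_sol_def
  proof (intro conjI allI impI)
    fix t show "\<sigma> \<cdot>\<^sub>m transpose_mat (\<Phi> (eps t)) \<in> carrier_mat N N" using PhiC[of "eps t"] by auto
  next
    fix n :: nat and t :: "nat \<Rightarrow> real"
    assume n: "1 \<le> n"
    obtain Rk Qk Sk Lk where hb: "Hblocks N L R Q S n = (Rk, Qk, Sk, Lk)" by (cases "Hblocks N L R Q S n") auto
    have HC: "Hmat L R Q S \<in> carrier_mat (N+N) (N+N)" by (rule Hmat_carrier[OF LC RC QC SC])
    from hb have Rk: "Rk \<in> carrier_mat N N" and Qk: "Qk \<in> carrier_mat N N"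
      and Sk: "Sk \<in> carrier_mat N N" and Lk: "Lk \<in> carrier_mat N N"
      unfolding Hblocks_def split_block_def Let_def using HC by auto
    define X where "X = \<Phi> (eps t)"
    have XC: "X \<in> carrier_mat N N" using PhiC unfolding X_def by auto
    define c :: complex where "c = (-1)^n"
    define e :: real where "e = (if even n then -1 else 1)"
    have ce: "complex_of_real e = - c" unfolding c_def e_def using n
      by (cases "even n") (auto elim!: evenE oddE)
    define D0 where "D0 = Sk + Lk * X - X * Rk - X * Qk * X"
    have h0: "has_tderiv \<Phi> n (eps t) D0" using hyp[OF n, of "eps t"] hb unfolding D0_def X_def by simp
    have D0C: "D0 \<in> carrier_mat N N" unfolding D0_def using Rk Qk Sk Lk XC by auto
    define Psi where "Psi = \<sigma> \<cdot>\<^sub>m transpose_mat X"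
    have M1: "(c \<cdot>\<^sub>m transpose_mat Rk) * Psi = (c*\<sigma>) \<cdot>\<^sub>m transpose_mat (X * Rk)"
      unfolding Psi_def using Rk XC
      by (simp add: transpose_mult[OF XC Rk] mult_smult_assoc_mat[of _ N N _ N] mult_smult_distrib[of _ N N _ N] smult_smult_mat mult.commute)
    have M2: "Psi * (c \<cdot>\<^sub>m transpose_mat Lk) = (c*\<sigma>) \<cdot>\<^sub>m transpose_mat (Lk * X)"
      unfolding Psi_def using Lk XC
      by (simp add: transpose_mult[OF Lk XC] mult_smult_assoc_mat[of _ N N _ N] mult_smult_distrib[of _ N N _ N] smult_smult_mat mult.commute)
    have M3: "Psi * ((- (c * \<sigma>)) \<cdot>\<^sub>m transpose_mat Qk) * Psi = (- c * \<sigma>) \<cdot>\<^sub>m transpose_mat (X * Qk * X)"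
    proof -
      have T: "transpose_mat (X * Qk * X) = transpose_mat X * (transpose_mat Qk * transpose_mat X)"
        using transpose_mult[OF XC Qk] transpose_mult[of "X*Qk" N N X N] XC Qk by simp
      have P: "Psi * ((- (c * \<sigma>)) \<cdot>\<^sub>m transpose_mat Qk) * Psi
          = (\<sigma> * (- (c * \<sigma>)) * \<sigma>) \<cdot>\<^sub>m (transpose_mat X * (transpose_mat Qk * transpose_mat X))"
        unfolding Psi_def using XC Qk
        by (simp add: mult_smult_assoc_mat[of _ N N _ N] mult_smult_distrib[of _ N N _ N] smult_smult_mat mult.assoc)
      have s3: "\<sigma> * (- (c * \<sigma>)) * \<sigma> = - c * \<sigma>"
      proof -
        have "\<sigma> * (- (c * \<sigma>)) * \<sigma> = - c * (\<sigma> * \<sigma>) * \<sigma>" by (simp add: algebra_simps)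
        then show ?thesis using sig by simp
      qed
      show ?thesis by (simp only: T P s3)
    qed
    have hb2: "Hblocks N (- transpose_mat R) (- transpose_mat L) (\<sigma> \<cdot>\<^sub>m transpose_mat Q) (\<sigma> \<cdot>\<^sub>m transpose_mat S) n
      = (c \<cdot>\<^sub>m transpose_mat Lk, (- (c * \<sigma>)) \<cdot>\<^sub>m transpose_mat Qk, (- (c * \<sigma>)) \<cdot>\<^sub>m transpose_mat Sk, c \<cdot>\<^sub>m transpose_mat Rk)"
      unfolding c_def by (rule Hblocks_trans[OF LC RC QC SC sig hb])
    have RHS: "(- (c * \<sigma>)) \<cdot>\<^sub>m transpose_mat Sk + (c \<cdot>\<^sub>m transpose_mat Rk) * Psi - Psi * (c \<cdot>\<^sub>m transpose_mat Lk)
        - Psi * ((- (c * \<sigma>)) \<cdot>\<^sub>m transpose_mat Qk) * Psi = (- c * \<sigma>) \<cdot>\<^sub>m transpose_mat D0"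
      unfolding M1 M2 M3 D0_def
      by (rule eq_matI) (use Rk Qk Sk Lk XC in \<open>auto simp: algebra_simps\<close>)
    show "case Hblocks N (- transpose_mat R) (- transpose_mat L) (\<sigma> \<cdot>\<^sub>m transpose_mat Q) (\<sigma> \<cdot>\<^sub>m transpose_mat S) n of
         (Rk, Qk, Sk, Lk) \<Rightarrow> has_tderiv (\<lambda>t. \<sigma> \<cdot>\<^sub>m transpose_mat (\<Phi> (eps t))) n t
            (Sk + Lk * (\<sigma> \<cdot>\<^sub>m transpose_mat (\<Phi> (eps t))) - \<sigma> \<cdot>\<^sub>m transpose_mat (\<Phi> (eps t)) * Rk -
             \<sigma> \<cdot>\<^sub>m transpose_mat (\<Phi> (eps t)) * Qk * (\<sigma> \<cdot>\<^sub>m transpose_mat (\<Phi> (eps t))))"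
      unfolding hb2 split X_def[symmetric] Psi_def[symmetric] RHS
      unfolding has_tderiv_def
    proof (intro allI impI)
      fix i j assume i: "i < dim_row ((- c * \<sigma>) \<cdot>\<^sub>m transpose_mat D0)" and j: "j < dim_col ((- c * \<sigma>) \<cdot>\<^sub>m transpose_mat D0)"
      then have iN: "i < N" and jN: "j < N" using D0C by auto
      have d1: "((\<lambda>u. \<Phi> ((eps t)(n := u)) $$ (j, i)) has_vector_derivative D0 $$ (j, i)) (at (eps t n))"
        using h0 iN jN D0C unfolding has_tderiv_def by auto
      have d2: "((\<lambda>s. e * s) has_vector_derivative e) (at (t n))"
        using has_vector_derivative_mult_right[OF has_vector_derivative_id, of e] by simp
      have d3: "(((\<lambda>u. \<Phi> ((eps t)(n := u)) $$ (j, i)) \<circ> (\<lambda>s. e * s)) has_vector_derivative (e *\<^sub>R D0 $$ (j, i))) (at (t n))"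
        by (rule vector_diff_chain_at[OF d2]) (use d1 eps_at[OF n, of t] in \<open>simp add: e_def\<close>)
      have d4: "((\<lambda>s. \<sigma> * (((\<lambda>u. \<Phi> ((eps t)(n := u)) $$ (j, i)) \<circ> (\<lambda>s. e * s)) s)) has_vector_derivative (\<sigma> * (e *\<^sub>R D0 $$ (j, i)))) (at (t n))"
        by (rule has_vector_derivative_mult_right[OF d3])
      have f_eq: "(\<lambda>s. (\<sigma> \<cdot>\<^sub>m transpose_mat (\<Phi> (eps (t(n := s))))) $$ (i, j))
          = (\<lambda>s. \<sigma> * (((\<lambda>u. \<Phi> ((eps t)(n := u)) $$ (j, i)) \<circ> (\<lambda>s. e * s)) s))"
      proof -
        have dims: "\<And>u. dim_row (\<Phi> u) = N" "\<And>u. dim_col (\<Phi> u) = N" using PhiC by auto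
        show ?thesis using iN jN by (auto simp: eps_upd[OF n] e_def fun_eq_iff dims)
      qed
      have v_eq: "((- c * \<sigma>) \<cdot>\<^sub>m transpose_mat D0) $$ (i, j) = \<sigma> * (e *\<^sub>R D0 $$ (j, i))"
        using D0C iN jN ce by (simp add: scaleR_conv_of_real)
      show "((\<lambda>s. (\<sigma> \<cdot>\<^sub>m transpose_mat (\<Phi> (eps (t(n := s))))) $$ (i, j)) has_vector_derivative
          ((- c * \<sigma>) \<cdot>\<^sub>m transpose_mat D0) $$ (i, j)) (at (t n))"
        unfolding f_eq v_eq by (rule d4)
    qed
  qed
qed

end
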